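(* Let $A\in\mathbb{R}^{m\times n}$ with $m>n$ be a full-rank standardized matrix with no two distinct rows parallel. Let $x\in\mathbb{R}^n$, $w\in\mathbb{R}^m$, and $b=Ax+w$. Let $x_k$ denote the $k$-th iterate of the two-subspace Kaczmarz method applied to $(A,b)$ from a deterministic starting point $x_0$. Then for every $k\ge0$, $$\mathbb{E}\|x-x_k\|_2\le\eta^{k/2}\|x-x_0\|_2+\frac{3}{1-\sqrt\eta}\cdot\frac{\|w\|_\infty}{\sqrt{1-\Delta^2}},$$ where $\eta=\left(1-\frac1R\right)^2-\frac DR$ and $D=\min\left\{\frac{\delta^2(1-\delta)}{1+\delta},\frac{\Delta^2(1-\Delta)}{1+\Delta}\right\}$.
   Context: $A\in\mathbb{R}^{m\times n}$ has rows $a_1,\dots,a_m$. It is called standardized if $\|a_i\|_2=1$ for all $i$. "No two distinct rows parallel" means $|\langle a_r,a_s\rangle|<1$ for all $r\ne s$. $\|w\|_\infty$ denotes the largest absolute value of an entry of $w$. Two-subspace Kaczmarz method for $(A,b)$, $b\in\mathbb{R}^m$: start from $x_0\in\mathbb{R}^n$. For $k=1,2,\dots$, choose an ordered pair $(r,s)$ of distinct indices in $\{1,\dots,m\}$ uniformly at random among the $m^2-m$ such pairs, independently of all previous choices. Then set $\mu_k=\langle a_r,a_s\rangle$, $y_k=x_{k-1}+(b_s-\langle x_{k-1},a_s\rangle)a_s$, $v_k=\frac{a_r-\mu_k a_s}{\sqrt{1-\mu_k^2}}$, $\beta_k=\frac{b_r-b_s\mu_k}{\sqrt{1-\mu_k^2}}$,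 and $x_k=y_k+(\beta_k-\langle y_k,v_k\rangle)v_k$. Coherence parameters: $\Delta=\max_{j\ne k}|\langle a_j,a_k\rangle|$ and $\delta=\min_{j\ne k}|\langle a_j,a_k\rangle|$. Scaled condition number: $R=\|A\|_F^2\|A^{-1}\|^2$, where $\|A^{-1}\|=\inf\{M: M\|Az\|_2\ge\|z\|_2\ \text{for all } z\}$, i.e. the reciprocal of the smallest singular value of $A$. *)

theory Defs
  imports "HOL-Analysis.Analysis" "HOL-Probability.Probability"
begin

text \<open>Rows of A are the vectors A $ i, for i in the finite row index type 'm.\<close>

definition standardized :: "real^'n^'m \<Rightarrow> bool" where
  "standardized A \<longleftrightarrow> (\<forall>i. norm (A $ i) = 1)"

definition no_parallel_rows :: "real^'n^'m \<Rightarrow> bool" where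
  "no_parallel_rows A \<longleftrightarrow> (\<forall>r s. r \<noteq> s \<longrightarrow> \<bar>inner (A $ r) (A $ s)\<bar> < 1)"

definition coh_max :: "real^'n^'m \<Rightarrow> real" where
  "coh_max A = Max {\<bar>inner (A $ j) (A $ k)\<bar> | j k. j \<noteq> k}"

definition coh_min :: "real^'n^'m \<Rightarrow> real" where
  "coh_min A = Min {\<bar>inner (A $ j) (A $ k)\<bar> | j k. j \<noteq> k}"

definition frobenius_norm :: "real^'n^'m \<Rightarrow> real" where
  "frobenius_norm A = sqrt (\<Sum>i\<in>UNIV. \<Sum>j\<in>UNIV. (A $ i $ j)^2)"

text \<open>norm of A^{-1}: inf of M with M * norm (A z) \<ge> norm z for all z.\<close>
definition inv_norm :: "real^'n^'m \<Rightarrow> real" where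
  "inv_norm A = Inf {M. \<forall>z. M * norm (A *v z) \<ge> norm z}"

definition scaled_cond :: "real^'n^'m \<Rightarrow> real" where
  "scaled_cond A = (frobenius_norm A)^2 * (inv_norm A)^2"

definition sup_norm :: "real^'m \<Rightarrow> real" where
  "sup_norm w = Max {\<bar>w $ i\<bar> | i. True}"

definition tsk_step :: "real^'n^'m \<Rightarrow> real^'m \<Rightarrow> real^'n \<Rightarrow> 'm \<times> 'm \<Rightarrow> real^'n" where
  "tsk_step A b x0 p = (case p of (r, s) \<Rightarrow>
     let mu = inner (A $ r) (A $ s);
         y = x0 + (b $ s - inner x0 (A $ s)) *\<^sub>R (A $ s);
         v = (1 / sqrt (1 - mu^2)) *\<^sub>R (A $ r - mu *\<^sub>R A $ s);
         beta = (b $ r - b $ s * mu) / sqrt (1 - mu^2)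
     in y + (beta - inner y v) *\<^sub>R v)"

definition pair_pmf :: "('m::finite \<times> 'm) pmf" where
  "pair_pmf = pmf_of_set {(r, s). r \<noteq> s}"

fun tsk_dist :: "real^'n^'m::finite \<Rightarrow> real^'m \<Rightarrow> real^'n \<Rightarrow> nat \<Rightarrow> (real^'n) pmf" where
  "tsk_dist A b x0 0 = return_pmf x0"
| "tsk_dist A b x0 (Suc k) =
     bind_pmf (tsk_dist A b x0 k) (\<lambda>x. map_pmf (tsk_step A b x) pair_pmf)"

end

theory Submission
  imports Defs
begin



lemma exp_bind_fin:
  fixes g :: "'b \<Rightarrow> real"
  assumes fin: "finite (set_pmf (bind_pmf M N))"
  shows "measure_pmf.expectation (bind_pmf M N) g
       = measure_pmf.expectation M (\<lambda>x. measure_pmf.expectation (N x) g)"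
proof -
  define Y where "Y = set_pmf (bind_pmf M N)"
  define B where "B = (\<Sum>y\<in>Y. \<bar>g y\<bar>)"
  define g' where "g' y = (if y \<in> Y then g y else 0)" for y
  have b: "\<bar>g' y\<bar> \<le> B" for y
    using fin unfolding B_def g'_def Y_def[symmetric] by (auto intro: member_le_sum)
  have 1: "measure_pmf.expectation (bind_pmf M N) g = measure_pmf.expectation (bind_pmf M N) g'"
    by (intro integral_cong_AE) (auto simp: AE_measure_pmf_iff g'_def Y_def)
  have 2: "measure_pmf.expectation (N x) g = measure_pmf.expectation (N x) g'" if "x \<in> set_pmf M" for x
    using that by (intro integral_cong_AE) (auto simp: AE_measure_pmf_iff g'_def Y_def)
  have 3: "measure_pmf.expectation (bind_pmf M N) g' = (\<integral>x. measure_pmf.expectation (N x) g' \<partial>M)"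
    unfolding measure_pmf_bind
    using measurable_measure_pmf[of N]
    by (intro integral_bind[where K="count_space UNIV" and B=B and B'=1])
       (auto intro: b simp: measure_pmf.finite_measure)
  have 4: "(\<integral>x. measure_pmf.expectation (N x) g' \<partial>M) = measure_pmf.expectation M (\<lambda>x. measure_pmf.expectation (N x) g)"
    by (intro integral_cong_AE) (auto simp: AE_measure_pmf_iff 2)
  show ?thesis using 1 3 4 by simp
qed

lemma fin_tsk: "finite (set_pmf (tsk_dist A b x0 k))"
  by (induction k) auto

lemma quasi:
  fixes a t b :: real
  assumes "0 \<le> a" "a \<le> t" "t \<le> b" "b < 1"
  shows "min (a^2*(1-a)/(1+a)) (b^2*(1-b)/(1+b)) \<le> t^2*(1-t)/(1+t)"
proof -
  define Q where "Q x y = x + y - x^2 - y^2 - x*y*(x+y)" for x y :: real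
  have fd: "x^2*(1-x)/(1+x) - y^2*(1-y)/(1+y) = (x-y)*Q y x/((1+x)*(1+y))" if "0 \<le> x" "0 \<le> y" for x y :: real
    using that by (simp add: Q_def field_simps) (simp add: algebra_simps power2_eq_square power3_eq_cube)
  show ?thesis
  proof (cases "Q a t \<ge> 0")
    case True
    have "0 \<le> (t-a)*Q a t/((1+t)*(1+a))" using True assms by simp
    then have "a^2*(1-a)/(1+a) \<le> t^2*(1-t)/(1+t)" using fd[of t a] assms by simp
    then show ?thesis by simp
  next
    case False
    have "Q t b \<le> 0"
    proof (rule ccontr)
      assume c: "\<not> Q t b \<le> 0"
      have diff: "Q t b - Q t a = (b-a)*(1+t)*((1-t) - (a+b))"
        by (simp add: Q_def algebra_simps power2_eq_square)
      have "Q t b - Q t a > 0" using c False by (simp add: Q_def algebra_simps)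
      have nn: "(b-a)*(1+t) \<ge> 0" using assms by simp
      have "(1-t) - (a+b) > 0"
      proof (rule ccontr)
        assume "\<not> (1-t) - (a+b) > 0"
        then have "(b-a)*(1+t)*((1-t)-(a+b)) \<le> 0" using nn by (intro mult_nonneg_nonpos) auto
        then show False using diff \<open>Q t b - Q t a > 0\<close> by simp
      qed
      then have s: "a + t < 1" "a + t \<ge> 0" using assms by auto
      have "(a+t)^2 \<le> (a+t)" using s by (simp add: power2_eq_square mult_left_le)
      moreover have "a*t*(a+t) \<le> 2*a*t" proof - have "a*t \<ge> 0" using assms by simp then show ?thesis using s mult_left_mono[of "a+t" 2 "a*t"] by (simp add: algebra_simps) qed
      ultimately have "Q a t \<ge> 0" unfolding Q_def by (simp add: power2_eq_square algebra_simps)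
      then show False using False by simp
    qed
    have "(b - t)*Q t b \<le> 0" using \<open>Q t b \<le> 0\<close> assms by (intro mult_nonneg_nonpos) auto
    then have "(b - t)*Q t b/((1+b)*(1+t)) \<le> 0" using assms by (intro divide_nonpos_pos) auto
    then have "b^2*(1-b)/(1+b) \<le> t^2*(1-t)/(1+t)" using fd[of b t] assms by linarith
    then show ?thesis by simp
  qed
qed



lemma step_decomp:
  fixes A :: "real^'n^'m" and x x' :: "real^'n" and w :: "real^'m"
  assumes na: "norm (A$s) = 1" and mu1: "\<bar>inner (A$r) (A$s)\<bar> < 1"
  defines "mu \<equiv> inner (A$r) (A$s)"
  defines "k \<equiv> sqrt (1 - mu^2)"
  defines "v \<equiv> (1/k) *\<^sub>R (A$r - mu *\<^sub>R A$s)"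
  defines "d \<equiv> x' - x"
  shows "tsk_step A (A *v x + w) x' (r,s) - x
     = (d - inner d (A$s) *\<^sub>R A$s - inner d v *\<^sub>R v)
       + (w$s *\<^sub>R A$s + ((w$r - w$s * mu)/k) *\<^sub>R v)"
proof -
  have k0: "k > 0" unfolding k_def using mu1 unfolding mu_def[symmetric]
    by (simp add: abs_square_less_1)
  have ss: "inner (A$s) (A$s) = 1" using na by (simp add: norm_eq_1)
  have av: "inner (A$s) v = 0" unfolding v_def
    by (simp add: inner_diff_right ss mu_def inner_commute)
  have vx: "inner x v = (inner (A$r) x - mu * inner (A$s) x)/k"
    unfolding v_def by (simp add: inner_diff_right inner_commute)
  define y where "y = x' + ((A *v x + w)$s - inner x' (A$s)) *\<^sub>R A$s"
  have y1: "y - x = d + (w$s - inner d (A$s)) *\<^sub>R A$s"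
    unfolding y_def d_def by (simp add: matrix_vector_mul_component inner_diff_left inner_commute algebra_simps)
  have yv: "inner y v = inner x v + inner d v"
  proof -
    have "inner y v = inner x v + inner (y - x) v" by (simp add: inner_diff_left)
    also have "inner (y - x) v = inner d v" unfolding y1
      by (simp add: inner_add_left av)
    finally show ?thesis .
  qed
  define beta where "beta = ((A *v x + w)$r - (A *v x + w)$s * mu) / k"
  have beta: "beta = inner x v + (w$r - w$s*mu)/k"
    unfolding beta_def vx using k0
    by (simp add: matrix_vector_mul_component field_simps inner_commute)
  have st: "tsk_step A (A *v x + w) x' (r,s) = y + (beta - inner y v) *\<^sub>R v"
    unfolding tsk_step_def Let_def y_def beta_def v_def k_def mu_def by simp
  show ?thesis unfolding st
    using y1 yv beta by (simp add: algebra_simps)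
qed

lemma pyth:
  fixes d a v :: "'a::real_inner"
  assumes "inner a a = 1" "inner v v = 1" "inner a v = 0"
  shows "norm (d - inner d a *\<^sub>R a - inner d v *\<^sub>R v)^2 = norm d^2 - (inner d a)^2 - (inner d v)^2"
proof -
  have va: "inner v a = 0" using assms(3) by (simp add: inner_commute)
  show ?thesis
    unfolding power2_norm_eq_inner
    using assms va by (simp add: inner_diff_left inner_diff_right power2_eq_square algebra_simps inner_commute[of a d] inner_commute[of v d])
qed


lemma step_bound:
  fixes A :: "real^'n^'m" and x x' :: "real^'n" and w :: "real^'m"
  assumes nr: "norm (A$r) = 1" and na: "norm (A$s) = 1"
    and muD: "\<bar>inner (A$r) (A$s)\<bar> \<le> \<Delta>" and D1: "\<Delta> < 1"
    and W: "\<And>i. \<bar>w$i\<bar> \<le> W"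
  shows "0 \<le> norm (x'-x)^2 - ((inner (A$s) (x'-x))^2
          + (inner (A$r) (x'-x) - inner (A$r) (A$s) * inner (A$s) (x'-x))^2 / (1 - (inner (A$r) (A$s))^2))
    \<and> norm (x - tsk_step A (A *v x + w) x' (r,s))
    \<le> sqrt (norm (x'-x)^2 - ((inner (A$s) (x'-x))^2
          + (inner (A$r) (x'-x) - inner (A$r) (A$s) * inner (A$s) (x'-x))^2 / (1 - (inner (A$r) (A$s))^2)))
      + 3*W/sqrt(1-\<Delta>^2)"
proof -
  define mu where "mu = inner (A$r) (A$s)"
  define k where "k = sqrt (1 - mu^2)"
  define v where "v = (1/k) *\<^sub>R (A$r - mu *\<^sub>R A$s)"
  define d where "d = x' - x"
  have mu1: "\<bar>mu\<bar> < 1" using muD D1 mu_def by simp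
  have k0: "k > 0" unfolding k_def using mu1 by (simp add: abs_square_less_1)
  have ss: "inner (A$s) (A$s) = 1" using na by (simp add: norm_eq_1)
  have rr: "inner (A$r) (A$r) = 1" using nr by (simp add: norm_eq_1)
  have av: "inner (A$s) v = 0" unfolding v_def
    by (simp add: inner_diff_right ss mu_def inner_commute)
  have kk: "k^2 = 1 - mu^2" unfolding k_def using mu1 by (simp add: abs_square_less_1 less_imp_le)
  have vv: "inner v v = 1"
  proof -
    have "inner (A$r - mu *\<^sub>R A$s) (A$r - mu *\<^sub>R A$s) = 1 - mu^2"
      by (simp add: inner_diff_left inner_diff_right rr ss mu_def inner_commute power2_eq_square)
    then show ?thesis unfolding v_def using kk k0 by (simp add: power2_eq_square) (metis k0 kk less_irrefl power2_eq_square mult_pos_pos diff_self)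
  qed
  have dv: "inner d v = (inner (A$r) d - mu * inner (A$s) d)/k"
    unfolding v_def by (simp add: inner_diff_right inner_commute)
  have dv2: "(inner d v)^2 = (inner (A$r) d - mu * inner (A$s) d)^2/(1 - mu^2)"
    unfolding dv power_divide kk ..
  define d' where "d' = d - inner d (A$s) *\<^sub>R A$s - inner d v *\<^sub>R v"
  have eqd: "norm d'^2 = norm d^2 - ((inner (A$s) d)^2 + (inner (A$r) d - mu * inner (A$s) d)^2/(1 - mu^2))"
  proof -
    have "norm d'^2 = norm d^2 - (inner d (A$s))^2 - (inner d v)^2"
      unfolding d'_def by (rule pyth) (use ss vv av in auto)
    then show ?thesis unfolding dv2 by (simp add: inner_commute)
  qed
  have nd': "norm d' = sqrt (norm d^2 - ((inner (A$s) d)^2 + (inner (A$r) d - mu * inner (A$s) d)^2/(1 - mu^2)))"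
    using eqd by (metis norm_ge_zero real_sqrt_unique)
  have nn: "0 \<le> norm d^2 - ((inner (A$s) d)^2 + (inner (A$r) d - mu * inner (A$s) d)^2/(1 - mu^2))"
    using eqd by (metis zero_le_power2)
  have dec: "tsk_step A (A *v x + w) x' (r,s) - x = d' + (w$s *\<^sub>R A$s + ((w$r - w$s * mu)/k) *\<^sub>R v)"
    unfolding d'_def d_def v_def k_def mu_def by (rule step_decomp) (use na mu1 mu_def in auto)
  have nv: "norm v = 1" using vv by (simp add: norm_eq_1)
  have W0: "W \<ge> 0" using W[of s] by simp
  have kD: "sqrt (1 - \<Delta>^2) \<le> k" unfolding k_def
  proof (rule real_sqrt_le_mono)
    have "mu^2 \<le> \<Delta>^2" using muD mu_def by (metis abs_ge_zero power2_abs power_mono)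
    then show "1 - \<Delta>^2 \<le> 1 - mu^2" by simp
  qed
  have sD: "sqrt (1 - \<Delta>^2) > 0" using D1 muD by (simp add: abs_square_less_1)
  have sD1: "sqrt (1 - \<Delta>^2) \<le> 1" by simp
  have t1: "\<bar>w$s\<bar> \<le> W/sqrt(1-\<Delta>^2)"
  proof -
    have "W \<le> W/sqrt(1-\<Delta>^2)" using sD sD1 W0 by (simp add: le_divide_eq mult_left_le)
    then show ?thesis using W[of s] by linarith
  qed
  have t2: "\<bar>(w$r - w$s * mu)/k\<bar> \<le> 2*W/sqrt(1-\<Delta>^2)"
  proof -
    have "\<bar>w$r - w$s * mu\<bar> \<le> \<bar>w$r\<bar> + \<bar>w$s\<bar> * \<bar>mu\<bar>" by (metis abs_mult abs_triangle_ineq4)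
    also have "\<dots> \<le> W + W * 1" using W[of r] W[of s] mu1
      by (intro add_mono mult_mono) auto
    finally have "\<bar>w$r - w$s * mu\<bar> \<le> 2*W" by simp
    then have "\<bar>(w$r - w$s * mu)/k\<bar> \<le> 2*W/k" using k0 by (simp add: divide_right_mono)
    also have "2*W/k \<le> 2*W/sqrt(1-\<Delta>^2)" using kD sD W0 by (simp add: frac_le)
    finally show ?thesis .
  qed
  have "norm (x - tsk_step A (A *v x + w) x' (r,s)) = norm (tsk_step A (A *v x + w) x' (r,s) - x)"
    by (simp add: norm_minus_commute)
  also have "\<dots> \<le> norm d' + (norm (w$s *\<^sub>R A$s) + norm (((w$r - w$s * mu)/k) *\<^sub>R v))"
    unfolding dec by (meson norm_triangle_ineq norm_triangle_le add_left_mono order_trans)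
  also have "\<dots> = norm d' + (\<bar>w$s\<bar> + \<bar>(w$r - w$s * mu)/k\<bar>)" using na nv by simp
  also have "\<dots> \<le> norm d' + (W/sqrt(1-\<Delta>^2) + 2*W/sqrt(1-\<Delta>^2))"
    using t1 t2 by simp
  also have "\<dots> = norm d' + 3*W/sqrt(1-\<Delta>^2)" by (simp add: add_divide_distrib[symmetric])
  finally show ?thesis using nn unfolding nd' d_def mu_def by simp
qed



lemma norm_sq_vec: fixes v :: "real^'m" shows "norm v ^2 = (\<Sum>i\<in>UNIV. (v$i)^2)"
  by (simp add: norm_vec_def L2_set_def sum_nonneg)

lemma sum_pairs:
  fixes f :: "'m::finite \<times> 'm \<Rightarrow> real"
  shows "(\<Sum>p\<in>{(r,s). r \<noteq> s}. f p) = (\<Sum>r\<in>UNIV. \<Sum>s\<in>UNIV. if r = s then 0 else f (r,s))"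
proof -
  have "(\<Sum>p\<in>{(r,s). r \<noteq> s}. f p) = (\<Sum>p\<in>UNIV \<inter> {(r,s). r \<noteq> s}. f p)" by simp
  also have "\<dots> = (\<Sum>p\<in>UNIV. if p \<in> {(r,s). r \<noteq> s} then f p else 0)"
    by (rule sum.inter_restrict) simp
  also have "\<dots> = (\<Sum>p\<in>UNIV \<times> UNIV. if p \<in> {(r,s). r \<noteq> s} then f p else 0)"
    by simp
  also have "\<dots> = (\<Sum>r\<in>UNIV. \<Sum>s\<in>UNIV. if (r,s) \<in> {(r,s). r \<noteq> s} then f (r,s) else 0)"
    by (subst sum.cartesian_product) (auto simp: case_prod_unfold intro!: sum.cong)
  finally show ?thesis by (simp add: if_distrib cong: if_cong) (intro sum.cong refl, auto)
qed

lemma sum_offdiag: "(\<Sum>r\<in>(UNIV::'m::finite set). if r = s then 0 else K) = (real CARD('m) - 1) * K"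
proof -
  have "(\<Sum>r\<in>(UNIV::'m set). if r = s then 0 else K) = (\<Sum>r\<in>(UNIV::'m set). K - (if r = s then K else 0))"
    by (intro sum.cong) auto
  also have "\<dots> = real CARD('m) * K - K" by (simp add: sum_subtractf)
  finally show ?thesis by (simp add: algebra_simps)
qed

lemma card_pairs: "real (card {(r::'m::finite,s). r \<noteq> s}) = real CARD('m) * (real CARD('m) - 1)"
proof -
  have "real (card {(r::'m,s). r \<noteq> s}) = (\<Sum>p\<in>{(r::'m,s). r \<noteq> s}. 1)" by simp
  also have "\<dots> = (\<Sum>r\<in>(UNIV::'m set). \<Sum>s\<in>UNIV. if r = s then 0 else 1)" by (rule sum_pairs)
  also have "\<dots> = (\<Sum>r\<in>(UNIV::'m set). real CARD('m) - 1)"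
  proof (intro sum.cong refl)
    fix r :: 'm
    have "(\<Sum>s\<in>UNIV. if r = s then 0 else (1::real)) = (\<Sum>s\<in>UNIV. if s = r then 0 else (1::real))"
      by (intro sum.cong) auto
    then show "(\<Sum>s\<in>UNIV. if r = s then 0 else (1::real)) = real CARD('m) - 1" by (simp add: sum_offdiag)
  qed
  finally show ?thesis by simp
qed

lemma inv_norm_prop:
  fixes A :: "real^'n^'m"
  assumes "rank A = CARD('n)"
  shows "inv_norm A > 0" "\<And>z. inv_norm A * norm (A *v z) \<ge> norm z"
proof -
  define MS where "MS = {M. \<forall>z. M * norm (A *v z) \<ge> norm z}"
  have inj: "inj ((*v) A)" using assms full_rank_injective by blast
  have z0: "A *v z = 0 \<Longrightarrow> z = 0" for z using inj by (metis injD matrix_vector_mult_0_right)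
  obtain e where e: "e > 0" "\<And>z. norm (A *v z) \<ge> e * norm z"
    using injective_imp_isometric[of UNIV "(*v) A"] z0 by auto
  have ne: "1/e \<in> MS" unfolding MS_def using e by (auto simp: field_simps mult.commute)
  define a where "a = (axis undefined 1 :: real^'n)"
  have na: "norm a = 1" unfolding a_def by simp
  have pos: "M > 0" if "M \<in> MS" for M
  proof -
    have "norm a \<le> M * norm (A *v a)" using that unfolding MS_def by blast
    then have "M * norm (A *v a) \<ge> 1" using na by simp
    then show ?thesis by (meson norm_ge_zero not_le order.trans zero_less_one mult_nonpos_nonneg)
  qed
  have bdd: "bdd_below MS" using pos by (meson bdd_below.I less_imp_le)
  have pr: "Inf MS * norm (A *v z) \<ge> norm z" for z
  proof (cases "A *v z = 0")
    case True then show ?thesis using z0 by simp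
  next
    case False
    then have nz: "norm (A *v z) > 0" by simp
    have "norm z / norm (A *v z) \<le> Inf MS"
    proof (rule cInf_greatest)
      show "MS \<noteq> {}" using ne by auto
      fix M assume "M \<in> MS"
      then have "M * norm (A *v z) \<ge> norm z" unfolding MS_def by auto
      then show "norm z / norm (A *v z) \<le> M" using nz by (simp add: divide_le_eq)
    qed
    then show ?thesis using nz by (simp add: divide_le_eq)
  qed
  show "\<And>z. inv_norm A * norm (A *v z) \<ge> norm z" using pr unfolding inv_norm_def MS_def by simp
  have "Inf MS * norm (A *v a) \<ge> 1" using pr[of a] na by simp
  then have "Inf MS > 0" by (meson norm_ge_zero not_le order.trans zero_less_one mult_nonpos_nonneg)
  then show "inv_norm A > 0" unfolding inv_norm_def MS_def by simp
qed

lemma frob_sq: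
  fixes A :: "real^'n^'m"
  assumes "standardized A"
  shows "(frobenius_norm A)^2 = real CARD('m)"
proof -
  have "(\<Sum>j\<in>UNIV. (A$i$j)^2) = 1" for i
    using norm_sq_vec[of "A$i"] assms unfolding standardized_def by simp
  then show ?thesis unfolding frobenius_norm_def by (simp add: sum_nonneg)
qed



lemma pair_ineq:
  fixes x y mu :: real
  shows "(x - mu*y)^2 + (y - mu*x)^2 \<ge> (1 - \<bar>mu\<bar>)^2 * (x^2 + y^2)"
proof -
  have e: "(x - mu*y)^2 + (y - mu*x)^2 - (1 - \<bar>mu\<bar>)^2 * (x^2 + y^2)
      = 2*\<bar>mu\<bar>*(x^2 + y^2) - 4*mu*x*y"
    by (simp add: power2_eq_square algebra_simps)
  have "2*\<bar>mu\<bar>*(x^2 + y^2) - 4*mu*x*y \<ge> 0"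
  proof (cases "mu \<ge> 0")
    case True
    have "2*\<bar>mu\<bar>*(x^2 + y^2) - 4*mu*x*y = 2*mu*(x-y)^2" using True by (simp add: power2_eq_square algebra_simps)
    then show ?thesis using True by simp
  next
    case False
    have "2*\<bar>mu\<bar>*(x^2 + y^2) - 4*mu*x*y = 2*(-mu)*(x+y)^2" using False by (simp add: power2_eq_square algebra_simps)
    then show ?thesis using False by (simp add: mult_nonpos_nonneg)
  qed
  then show ?thesis using e by linarith
qed

lemma core:
  fixes c :: "'m::finite \<Rightarrow> real" and mu :: "'m \<Rightarrow> 'm \<Rightarrow> real"
  assumes sym: "\<And>r s. mu r s = mu s r"
    and lt: "\<And>r s. r \<noteq> s \<Longrightarrow> \<bar>mu r s\<bar> < 1"
    and Dle: "\<And>r s. r \<noteq> s \<Longrightarrow> D \<le> (mu r s)^2*(1-\<bar>mu r s\<bar>)/(1+\<bar>mu r s\<bar>)"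
    and F1: "(\<Sum>r\<in>UNIV. \<Sum>s\<in>UNIV. if r = s then 0 else (c r - mu r s * c s)^2) \<ge> \<sigma>2 * (m*E - S)"
    and S: "S = (\<Sum>i\<in>UNIV. (c i)^2)" and m: "m = real CARD('m)"
    and F2: "S \<ge> \<sigma>2 * E" and F3: "S \<le> m*E" and u: "u = \<sigma>2/m" and u0: "0 \<le> u" and u1: "u \<le> 1 + D"
  shows "(\<Sum>r\<in>UNIV. \<Sum>s\<in>UNIV. if r = s then 0 else (c s)^2 + (c r - mu r s * c s)^2/(1-(mu r s)^2))
         \<ge> m*(m-1)*(2*u - u^2 + D*u)*E"
proof -
  define h where "h r s = (mu r s)^2/(1-(mu r s)^2)*(c r - mu r s*c s)^2" for r s
  have split: "(if r = s then 0 else (c s)^2 + (c r - mu r s * c s)^2/(1-(mu r s)^2))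
     = (if r = s then 0 else (c s)^2) + (if r = s then 0 else (c r - mu r s * c s)^2) + (if r = s then 0 else h r s)" for r s
  proof (cases "r = s")
    case False
    have "(mu r s)^2 < 1" using lt[OF False] by (simp add: abs_square_less_1)
    then have "1 - (mu r s)^2 \<noteq> 0" by simp
    then show ?thesis using False unfolding h_def by (simp add: field_simps)
  qed simp
  have A1: "(\<Sum>r\<in>UNIV. \<Sum>s\<in>UNIV. if r = s then 0 else (c s)^2) = (m-1)*S"
  proof -
    have "(\<Sum>r\<in>UNIV. \<Sum>s\<in>UNIV. if r = s then 0 else (c s)^2) = (\<Sum>s\<in>UNIV. \<Sum>r\<in>(UNIV::'m set). if r = s then 0 else (c s)^2)"
      by (rule sum.swap)
    also have "\<dots> = (\<Sum>s\<in>UNIV. (m-1) * (c s)^2)" by (simp add: sum_offdiag m)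
    finally show ?thesis by (simp add: S sum_distrib_left)
  qed
  have A1': "(\<Sum>r\<in>UNIV. \<Sum>s\<in>UNIV. if r = s then 0 else (c r)^2) = (m-1)*S"
  proof -
    have i: "(\<Sum>s\<in>UNIV. if r = s then 0 else (c r)^2) = (m-1)*(c r)^2" for r
    proof -
      have "(\<Sum>s\<in>UNIV. if r = s then 0 else (c r)^2) = (\<Sum>s\<in>UNIV. if s = r then 0 else (c r)^2)"
        by (intro sum.cong) auto
      then show ?thesis by (simp add: sum_offdiag m)
    qed
    show ?thesis by (simp add: i S sum_distrib_left)
  qed
  have hsw: "(\<Sum>r\<in>UNIV. \<Sum>s\<in>UNIV. if r = s then 0 else h r s) = (\<Sum>r\<in>UNIV. \<Sum>s\<in>UNIV. if r = s then 0 else h s r)"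
  proof -
    have "(\<Sum>r\<in>UNIV. \<Sum>s\<in>UNIV. if r = s then 0 else h r s) = (\<Sum>s\<in>UNIV. \<Sum>r\<in>UNIV. if r = s then 0 else h r s)"
      by (rule sum.swap)
    also have "\<dots> = (\<Sum>r\<in>UNIV. \<Sum>s\<in>UNIV. if r = s then 0 else h s r)"
      by (intro sum.cong refl) auto
    finally show ?thesis .
  qed
  have pw: "h r s + h s r \<ge> D * ((c r)^2 + (c s)^2)" if rs: "r \<noteq> s" for r s
  proof -
    define t where "t = mu r s"
    have t1: "\<bar>t\<bar> < 1" using lt[OF rs] t_def by simp
    have den: "1 - t^2 > 0" using t1 by (simp add: abs_square_less_1)
    define g where "g = t^2/(1-t^2)"
    have g0: "g \<ge> 0" using den g_def by simp
    have hh: "h r s + h s r = g * ((c r - t*c s)^2 + (c s - t*c r)^2)"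
      unfolding h_def g_def t_def using sym[of s r] by (simp add: algebra_simps)
    have "g * ((c r - t*c s)^2 + (c s - t*c r)^2) \<ge> g * ((1 - \<bar>t\<bar>)^2 * ((c r)^2 + (c s)^2))"
      using g0 pair_ineq by (intro mult_left_mono) auto
    moreover have "g * (1 - \<bar>t\<bar>)^2 = t^2*(1-\<bar>t\<bar>)/(1+\<bar>t\<bar>)"
    proof -
      have "1 - t^2 = (1-\<bar>t\<bar>)*(1+\<bar>t\<bar>)" by (simp add: power2_eq_square algebra_simps abs_mult_self_eq)
      moreover have "1 - \<bar>t\<bar> > 0" using t1 by simp
      moreover have "1 + \<bar>t\<bar> > 0" by simp
      moreover have "\<And>a b::real. a > 0 \<Longrightarrow> b > 0 \<Longrightarrow> t^2/(a*b)*a^2 = t^2*a/b"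
        by (simp add: field_simps power2_eq_square)
      ultimately show ?thesis unfolding g_def by simp
    qed
    moreover have "D * ((c r)^2 + (c s)^2) \<le> (t^2*(1-\<bar>t\<bar>)/(1+\<bar>t\<bar>)) * ((c r)^2 + (c s)^2)"
      using Dle[OF rs] t_def by (intro mult_right_mono) auto
    ultimately show ?thesis using hh by (simp add: mult.assoc[symmetric])
  qed
  have A3: "(\<Sum>r\<in>UNIV. \<Sum>s\<in>UNIV. if r = s then 0 else h r s) \<ge> D*(m-1)*S"
  proof -
    have "2 * (\<Sum>r\<in>UNIV. \<Sum>s\<in>UNIV. if r = s then 0 else h r s)
        = (\<Sum>r\<in>UNIV. \<Sum>s\<in>UNIV. if r = s then 0 else h r s + h s r)"
    proof -
      have "(\<Sum>r\<in>UNIV. \<Sum>s\<in>UNIV. if r = s then 0 else h r s + h s r)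
          = (\<Sum>r\<in>UNIV. \<Sum>s\<in>UNIV. (if r = s then 0 else h r s) + (if r = s then 0 else h s r))"
        by (intro sum.cong) auto
      also have "\<dots> = (\<Sum>r\<in>UNIV. \<Sum>s\<in>UNIV. if r = s then 0 else h r s) + (\<Sum>r\<in>UNIV. \<Sum>s\<in>UNIV. if r = s then 0 else h s r)"
        by (simp add: sum.distrib)
      finally show ?thesis using hsw by simp
    qed
    also have "\<dots> \<ge> (\<Sum>r\<in>UNIV. \<Sum>s\<in>UNIV. if r = s then 0 else D * ((c r)^2 + (c s)^2))"
      using pw by (intro sum_mono) auto
    also have "(\<Sum>r\<in>UNIV. \<Sum>s\<in>UNIV. if r = s then 0 else D * ((c r)^2 + (c s)^2))
       = D * ((\<Sum>r\<in>UNIV. \<Sum>s\<in>UNIV. if r = s then 0 else (c r)^2) + (\<Sum>r\<in>UNIV. \<Sum>s\<in>UNIV. if r = s then 0 else (c s)^2))"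
      by (simp add: sum_distrib_left sum.distrib[symmetric] if_distrib algebra_simps cong: if_cong)
    finally show ?thesis using A1 A1' by (simp add: algebra_simps)
  qed
  have tot: "(\<Sum>r\<in>UNIV. \<Sum>s\<in>UNIV. if r = s then 0 else (c s)^2 + (c r - mu r s * c s)^2/(1-(mu r s)^2))
     = (m-1)*S + (\<Sum>r\<in>UNIV. \<Sum>s\<in>UNIV. if r = s then 0 else (c r - mu r s * c s)^2) + (\<Sum>r\<in>UNIV. \<Sum>s\<in>UNIV. if r = s then 0 else h r s)"
    unfolding split by (simp add: sum.distrib A1)
  have m1: "m \<ge> 1" using m by simp
  have sig: "\<sigma>2 = u*m" using u m1 by simp
  have b1: "\<sigma>2 * (m*E - S) \<ge> u*(m-1)*(m*E - S)"
    unfolding sig using F3 u0 m1 by (intro mult_right_mono mult_left_mono) auto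
  have b2: "(1 + D - u) * S \<ge> (1 + D - u) * (u*m*E)"
    using F2 u1 sig by (intro mult_left_mono) auto
  have "(m-1)*S + \<sigma>2 * (m*E - S) + D*(m-1)*S \<ge> (m-1)*((1+D-u)*S + u*m*E)"
    using b1 by (simp add: algebra_simps)
  moreover have "(m-1)*((1+D-u)*S + u*m*E) \<ge> (m-1)*((1+D-u)*(u*m*E) + u*m*E)"
    using b2 m1 by (intro mult_left_mono) auto
  moreover have "(m-1)*((1+D-u)*(u*m*E) + u*m*E) = m*(m-1)*(2*u - u^2 + D*u)*E"
    by (simp add: power2_eq_square algebra_simps)
  ultimately show ?thesis using tot F1 A3 by linarith
qed




theorem theorem4:
  fixes A :: "real^'n^'m" and x x0 :: "real^'n" and w :: "real^'m" and k :: nat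
  assumes "CARD('m) > CARD('n)"
    and "rank A = CARD('n)"
    and "standardized A"
    and "no_parallel_rows A"
  defines "b \<equiv> A *v x + w"
    and "R \<equiv> scaled_cond A"
    and "\<Delta> \<equiv> coh_max A"
    and "\<delta> \<equiv> coh_min A"
  defines "D \<equiv> min (\<delta>^2 * (1 - \<delta>) / (1 + \<delta>)) (\<Delta>^2 * (1 - \<Delta>) / (1 + \<Delta>))"
  defines "\<eta> \<equiv> (1 - 1 / R)^2 - D / R"
  shows "measure_pmf.expectation (tsk_dist A b x0 k) (\<lambda>xk. norm (x - xk))
           \<le> sqrt \<eta> ^ k * norm (x - x0)
             + 3 / (1 - sqrt \<eta>) * (sup_norm w / sqrt (1 - \<Delta>^2))"
proof -
  define m where "m = real CARD('m)"
  define N where "N = inv_norm A"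
  define W where "W = sup_norm w"
  define P where "P = {(r::'m,s). r \<noteq> s}"
  have nrm: "\<And>i. norm (A$i) = 1" using assms(3) unfolding standardized_def by auto
  have N0: "N > 0" and Nz: "\<And>z. N * norm (A *v z) \<ge> norm z"
    using inv_norm_prop[OF assms(2)] unfolding N_def by auto
  have Rm: "R = m * N^2" using frob_sq[OF assms(3)] unfolding R_def scaled_cond_def m_def N_def by simp
  have cn: "CARD('n) \<ge> 1" by (simp add: Suc_leI)
  have cm: "CARD('m) \<ge> 2" using assms(1) cn by linarith
  have m2: "m \<ge> 2" unfolding m_def using cm by simp
  obtain j0 :: 'm where True by simp
  have "UNIV \<noteq> {j0}" using cm by (metis One_nat_def card.empty card.insert empty_iff finite.intros(1) numeral_le_one_iff semiring_norm(69) Suc_1 not_less_eq_eq)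
  then obtain k0 :: 'm where k0: "k0 \<noteq> j0" by blast
  define CS where "CS = {\<bar>inner (A$j) (A$k)\<bar> | j k. j \<noteq> k}"
  have finCS: "finite CS"
  proof -
    have "CS \<subseteq> (\<lambda>(j,k). \<bar>inner (A$j) (A$k)\<bar>) ` UNIV" unfolding CS_def by auto
    then show ?thesis by (rule finite_subset) simp
  qed
  have inCS: "\<bar>inner (A$r) (A$s)\<bar> \<in> CS" if "r \<noteq> s" for r s using that unfolding CS_def by auto
  have neCS: "CS \<noteq> {}" using inCS[OF k0] by auto
  have CS1: "\<And>t. t \<in> CS \<Longrightarrow> 0 \<le> t \<and> t < 1"
    using assms(4) unfolding CS_def no_parallel_rows_def by auto
  have De: "\<Delta> = Max CS" unfolding \<Delta>_def coh_max_def CS_def ..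
  have de: "\<delta> = Min CS" unfolding \<delta>_def coh_min_def CS_def ..
  have D1: "\<Delta> < 1" "0 \<le> \<Delta>" using CS1[OF Max_in[OF finCS neCS]] De by auto
  have d0: "0 \<le> \<delta>" using CS1[OF Min_in[OF finCS neCS]] de by auto
  have muD: "\<bar>inner (A$r) (A$s)\<bar> \<le> \<Delta>" "\<delta> \<le> \<bar>inner (A$r) (A$s)\<bar>" if "r \<noteq> s" for r s
    using inCS[OF that] finCS De de by auto
  have Dq: "D \<le> (inner (A$r) (A$s))^2 * (1 - \<bar>inner (A$r) (A$s)\<bar>)/(1 + \<bar>inner (A$r) (A$s)\<bar>)" if "r \<noteq> s" for r s
    using quasi[OF d0 muD(2)[OF that] muD(1)[OF that] D1(1)] unfolding D_def by simp
  have D0: "D \<ge> 0" unfolding D_def using d0 D1 muD[OF k0] by auto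
  have Wi: "\<bar>w$i\<bar> \<le> W" for i
  proof -
    have "{\<bar>w $ i\<bar> | i. True} = range (\<lambda>i. \<bar>w$i\<bar>)" by auto
    then have "finite {\<bar>w $ i\<bar> | i. True}" by simp
    moreover have "\<bar>w $ i\<bar> \<in> {\<bar>w $ i\<bar> | i. True}" by blast
    ultimately show ?thesis unfolding W_def sup_norm_def by (rule Max_ge)
  qed
  define \<sigma>2 where "\<sigma>2 = 1 / N^2"
  define u where "u = 1 / R"
  have u_def': "u = \<sigma>2 / m" unfolding u_def \<sigma>2_def Rm by simp
  define T where "T d p = (case p of (r,s) \<Rightarrow> (inner (A$s) d)^2 + (inner (A$r) d - inner (A$r) (A$s) * inner (A$s) d)^2/(1-(inner (A$r) (A$s))^2))" for d :: "real^'n" and p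
  have AN: "norm y ^2 / N^2 \<le> norm (A *v y)^2" for y
  proof -
    have "norm y ^2 \<le> (N * norm (A *v y))^2" using Nz[of y] by (intro power_mono) auto
    then show ?thesis using N0 by (simp add: divide_le_eq power_mult_distrib mult.commute)
  qed
  have Av: "norm (A *v y)^2 = (\<Sum>r\<in>UNIV. (inner (A$r) y)^2)" for y
    by (simp add: norm_sq_vec matrix_vector_mul_component)
  have F1: "(\<Sum>r\<in>UNIV. \<Sum>s\<in>UNIV. if r = s then 0 else (inner (A$r) d - inner (A$r) (A$s) * inner (A$s) d)^2)
       \<ge> \<sigma>2 * (m * norm d^2 - (\<Sum>i\<in>UNIV. (inner (A$i) d)^2))" for d
  proof -
    have inner_s: "(\<Sum>r\<in>UNIV. if r = s then 0 else (inner (A$r) d - inner (A$r) (A$s) * inner (A$s) d)^2)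
        \<ge> \<sigma>2 * (norm d^2 - (inner (A$s) d)^2)" for s
    proof -
      define y where "y = d - inner (A$s) d *\<^sub>R A$s"
      have ss: "inner (A$s) (A$s) = 1" using nrm[of s] by (simp add: norm_eq_1)
      have "(\<Sum>r\<in>UNIV. if r = s then 0 else (inner (A$r) d - inner (A$r) (A$s) * inner (A$s) d)^2)
          = (\<Sum>r\<in>UNIV. (inner (A$r) y)^2)"
        by (intro sum.cong refl) (auto simp: y_def ss inner_diff_right algebra_simps)
      also have "\<dots> = norm (A *v y)^2" by (simp add: Av)
      finally have e1: "(\<Sum>r\<in>UNIV. if r = s then 0 else (inner (A$r) d - inner (A$r) (A$s) * inner (A$s) d)^2) = norm (A *v y)^2" .
      have ny: "norm y^2 = norm d^2 - (inner (A$s) d)^2"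
        unfolding y_def power2_norm_eq_inner
        by (simp add: inner_diff_left inner_diff_right ss inner_commute power2_eq_square algebra_simps)
      show ?thesis using AN[of y] unfolding e1 ny \<sigma>2_def by simp
    qed
    have "(\<Sum>r\<in>UNIV. \<Sum>s\<in>UNIV. if r = s then 0 else (inner (A$r) d - inner (A$r) (A$s) * inner (A$s) d)^2)
       = (\<Sum>s\<in>UNIV. \<Sum>r\<in>UNIV. if r = s then 0 else (inner (A$r) d - inner (A$r) (A$s) * inner (A$s) d)^2)"
      by (rule sum.swap)
    also have "\<dots> \<ge> (\<Sum>s\<in>UNIV. \<sigma>2 * (norm d^2 - (inner (A$s) d)^2))"
      by (intro sum_mono inner_s)
    also have "(\<Sum>s\<in>UNIV. \<sigma>2 * (norm d^2 - (inner (A$s) d)^2)) = \<sigma>2 * (m * norm d^2 - (\<Sum>i\<in>UNIV. (inner (A$i) d)^2))"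
      by (simp add: sum_distrib_left[symmetric] sum_subtractf m_def)
    finally show ?thesis .
  qed
  have F2: "(\<Sum>i\<in>UNIV. (inner (A$i) d)^2) \<ge> \<sigma>2 * norm d^2" for d
    using AN[of d] Av[of d] unfolding \<sigma>2_def by simp
  have F3: "(\<Sum>i\<in>UNIV. (inner (A$i) d)^2) \<le> m * norm d^2" for d
  proof -
    have "(inner (A$i) d)^2 \<le> norm d^2" for i
    proof -
      have "\<bar>inner (A$i) d\<bar> \<le> norm d" using Cauchy_Schwarz_ineq2[of "A$i" d] nrm[of i] by simp
      then show ?thesis by (metis abs_ge_zero power2_abs power_mono)
    qed
    then have "(\<Sum>i\<in>UNIV. (inner (A$i) d)^2) \<le> (\<Sum>i\<in>(UNIV::'m set). norm d^2)" by (intro sum_mono)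
    then show ?thesis by (simp add: m_def)
  qed
  define e1 where "e1 = (axis undefined 1 :: real^'n)"
  have ne1: "norm e1 = 1" unfolding e1_def by simp
  have u0: "u > 0" unfolding u_def Rm using N0 m2 by simp
  have u1: "u \<le> 1"
  proof -
    have "\<sigma>2 \<le> m" using F2[of e1] F3[of e1] ne1 by simp
    then show ?thesis unfolding u_def' using m2 by simp
  qed
  have eta: "\<eta> = (1 - u)^2 - D*u" unfolding \<eta>_def u_def by simp
  have cardP: "real (card P) = m*(m-1)" unfolding P_def m_def by (rule card_pairs)
  have contr: "(\<Sum>p\<in>P. norm d^2 - T d p) \<le> real (card P) * \<eta> * norm d^2" for d
  proof -
    have c: "(\<Sum>r\<in>UNIV. \<Sum>s\<in>UNIV. if r = s then 0 else (inner (A$s) d)^2 + (inner (A$r) d - inner (A$r) (A$s) * inner (A$s) d)^2/(1-(inner (A$r) (A$s))^2))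
         \<ge> m*(m-1)*(2*u - u^2 + D*u)*norm d^2"
    proof (rule core[OF _ _ _ F1[of d] refl m_def F2[of d] F3[of d] u_def'])
      show "\<And>r s. inner (A$r) (A$s) = inner (A$s) (A$r)" by (simp add: inner_commute)
      show "\<And>r s. r \<noteq> s \<Longrightarrow> \<bar>inner (A$r) (A$s)\<bar> < 1" using muD(1) D1 by fastforce
      show "\<And>r s. r \<noteq> s \<Longrightarrow> D \<le> (inner (A$r) (A$s))^2 * (1 - \<bar>inner (A$r) (A$s)\<bar>)/(1 + \<bar>inner (A$r) (A$s)\<bar>)"
        by (rule Dq)
      show "0 \<le> u" using u0 by simp
      show "u \<le> 1 + D" using u1 D0 by simp
    qed
    have "(\<Sum>p\<in>P. T d p) = (\<Sum>r\<in>UNIV. \<Sum>s\<in>UNIV. if r = s then 0 else (inner (A$s) d)^2 + (inner (A$r) d - inner (A$r) (A$s) * inner (A$s) d)^2/(1-(inner (A$r) (A$s))^2))"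
      unfolding P_def by (simp add: sum_pairs T_def cong: if_cong)
    then have "(\<Sum>p\<in>P. T d p) \<ge> m*(m-1)*(2*u - u^2 + D*u)*norm d^2" using c by simp
    moreover have "(\<Sum>p\<in>P. norm d^2 - T d p) = real (card P) * norm d^2 - (\<Sum>p\<in>P. T d p)"
      by (simp add: sum_subtractf)
    ultimately show ?thesis unfolding cardP eta by (simp add: power2_eq_square algebra_simps)
  qed
  define C3 where "C3 = 3*W/sqrt(1-\<Delta>^2)"
  have finP: "finite P" by simp
  have neP: "P \<noteq> {}" unfolding P_def using k0 by auto
  have cP0: "real (card P) > 0" using finP neP by (simp add: card_gt_0_iff)
  have SB: "0 \<le> norm (x'-x)^2 - T (x'-x) p \<and> norm (x - tsk_step A b x' p) \<le> sqrt (norm (x'-x)^2 - T (x'-x) p) + C3"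
    if pP: "p \<in> P" for x' p
  proof -
    obtain r s where p: "p = (r,s)" and rs: "r \<noteq> s" using pP unfolding P_def by (cases p) auto
    show ?thesis unfolding p T_def C3_def b_def
      using step_bound[of A r s \<Delta> w W x' x, OF nrm nrm muD(1)[OF rs] D1(1) Wi] by simp
  qed
  have Estep: "measure_pmf.expectation (map_pmf (tsk_step A b x') pair_pmf) (\<lambda>xk. norm (x - xk))
      \<le> sqrt \<eta> * norm (x - x') + C3" for x'
  proof -
    define d where "d = x' - x"
    define h where "h p = norm d^2 - T d p" for p
    define g where "g p = norm (x - tsk_step A b x' p)" for p
    have h0: "\<And>p. p \<in> P \<Longrightarrow> 0 \<le> h p" using SB unfolding h_def d_def by blast
    have gh: "\<And>p. p \<in> P \<Longrightarrow> g p \<le> sqrt (h p) + C3" using SB unfolding h_def d_def g_def by blast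
    have E: "measure_pmf.expectation (map_pmf (tsk_step A b x') pair_pmf) (\<lambda>xk. norm (x - xk)) = (\<Sum>p\<in>P. g p) / real (card P)"
      unfolding pair_pmf_def g_def P_def[symmetric] using finP neP by (simp add: integral_pmf_of_set)
    have s1: "(\<Sum>p\<in>P. g p) \<le> (\<Sum>p\<in>P. sqrt (h p)) + real (card P) * C3"
    proof -
      have "(\<Sum>p\<in>P. g p) \<le> (\<Sum>p\<in>P. sqrt (h p) + C3)" using gh by (rule sum_mono)
      then show ?thesis by (simp add: sum.distrib)
    qed
    have s2: "(\<Sum>p\<in>P. sqrt (h p)) \<le> real (card P) * sqrt \<eta> * norm d"
    proof -
      have "(\<Sum>p\<in>P. sqrt (h p))^2 \<le> (\<Sum>p\<in>P. (sqrt (h p))^2) * real (card P)"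
        by (rule sum_squared_le_sum_of_squares)
      also have "(\<Sum>p\<in>P. (sqrt (h p))^2) = (\<Sum>p\<in>P. h p)" using h0 by (intro sum.cong refl) simp
      also have "(\<Sum>p\<in>P. h p) * real (card P) \<le> (real (card P) * \<eta> * norm d^2) * real (card P)"
        using contr[of d] cP0 unfolding h_def by (intro mult_right_mono) auto
      also have "\<dots> = (real (card P) * norm d)^2 * \<eta>" by (simp add: power2_eq_square algebra_simps)
      finally have "(\<Sum>p\<in>P. sqrt (h p)) \<le> sqrt ((real (card P) * norm d)^2 * \<eta>)" by (rule real_le_rsqrt)
      also have "\<dots> = real (card P) * norm d * sqrt \<eta>" by (simp add: real_sqrt_mult)
      finally show ?thesis by (simp add: algebra_simps)
    qed
    have "(\<Sum>p\<in>P. g p) / real (card P) \<le> (real (card P) * sqrt \<eta> * norm d + real (card P) * C3) / real (card P)"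
      using s1 s2 cP0 by (intro divide_right_mono) auto
    also have "\<dots> = sqrt \<eta> * norm d + C3"
    proof -
      have "real (card P) \<noteq> 0" using cP0 by linarith
      then show ?thesis by (simp add: add_divide_distrib)
    qed
    finally show ?thesis unfolding E d_def by (simp add: norm_minus_commute)
  qed
  have eta0: "\<eta> \<ge> 0"
  proof -
    have "0 \<le> (\<Sum>p\<in>P. norm e1^2 - T e1 p)"
      using SB[of _ "x + e1"] by (intro sum_nonneg) simp
    also have "\<dots> \<le> real (card P) * \<eta> * norm e1^2" by (rule contr)
    finally have "0 \<le> real (card P) * \<eta>" using ne1 by simp
    then show ?thesis using cP0 neP by (simp add: zero_le_mult_iff)
  qed
  have eta1: "\<eta> < 1"
  proof -
    have "(1-u)^2 \<le> 1 - u" using u0 u1 by (simp add: power2_eq_square mult_left_le)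
    moreover have "D*u \<ge> 0" using D0 u0 by simp
    ultimately show ?thesis unfolding eta using u0 by linarith
  qed
  define q where "q = sqrt \<eta>"
  have q0: "q \<ge> 0" and q1: "q < 1" unfolding q_def using eta0 eta1 by auto
  have C30: "C3 \<ge> 0"
  proof -
    have "W \<ge> 0" using Wi[of j0] by linarith
    moreover have "sqrt (1 - \<Delta>^2) > 0" using D1 by (simp add: abs_square_less_1)
    ultimately show ?thesis unfolding C3_def by simp
  qed
  define C where "C = C3 / (1 - q)"
  have C0: "C \<ge> 0" unfolding C_def using C30 q1 by simp
  have qC: "q * C + C3 = C" unfolding C_def using q1 by (simp add: field_simps)
  have main: "measure_pmf.expectation (tsk_dist A b x0 k) (\<lambda>xk. norm (x - xk)) \<le> q ^ k * norm (x - x0) + C" for k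
  proof (induction k)
    case 0
    then show ?case using C0 by simp
  next
    case (Suc k)
    let ?E = "measure_pmf.expectation (tsk_dist A b x0 k) (\<lambda>xk. norm (x - xk))"
    have "measure_pmf.expectation (tsk_dist A b x0 (Suc k)) (\<lambda>xk. norm (x - xk))
        = measure_pmf.expectation (tsk_dist A b x0 k) (\<lambda>x'. measure_pmf.expectation (map_pmf (tsk_step A b x') pair_pmf) (\<lambda>xk. norm (x - xk)))"
      using exp_bind_fin[of "tsk_dist A b x0 k" "\<lambda>x. map_pmf (tsk_step A b x) pair_pmf" "\<lambda>xk. norm (x - xk)"]
        fin_tsk[of A b x0 "Suc k"] by simp
    also have "\<dots> \<le> measure_pmf.expectation (tsk_dist A b x0 k) (\<lambda>x'. q * norm (x - x') + C3)"
      using Estep unfolding q_def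
      by (intro integral_mono) (auto simp: integrable_measure_pmf_finite fin_tsk)
    also have "\<dots> = q * ?E + C3"
      by (simp add: integrable_measure_pmf_finite fin_tsk)
    also have "\<dots> \<le> q * (q ^ k * norm (x - x0) + C) + C3"
      using Suc q0 by (simp add: mult_left_mono)
    also have "\<dots> = q ^ Suc k * norm (x - x0) + C" using qC by (simp add: algebra_simps)
    finally show ?case .
  qed
  have "3 / (1 - sqrt \<eta>) * (sup_norm w / sqrt (1 - \<Delta>^2)) = C"
    unfolding C_def C3_def q_def W_def by simp
  then show ?thesis using main[of k] unfolding q_def by simp
qed


end
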